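(* Let $(M,g)$ be a general-relativistic spacetime and let $\gamma:\mathbb{R}\to M$ and $\tilde\gamma:\mathbb{R}\to M$ be two clocks (parameter ranging over all of $\mathbb{R}$) whose worldlines do not intersect, but which are sufficiently close to each other that the radar method can be carried through in both directions. If $\tilde\gamma$ is synchroneous to $\gamma$ and $\gamma$ is synchroneous to $\tilde\gamma$, then the radar distance $R(\tilde t)$ of $\tilde\gamma(\tilde t)$ with respect to $\gamma$ is a constant $R_0$ (independent of $\tilde t$), and the radar distance $\tilde R(t)$ of $\gamma(t)$ with respect to $\tilde\gamma$ is the same constant $R_0$.
   Context: A general-relativistic spacetime is a 4-manifold with a smooth Lorentzian metric $g$ and a time orientation. A clock is a smooth embedding $\gamma$ of a real interval into $M$ with everywhere timelike, future-pointing tangent vector. Light rays are lightlike geodesics. Radar method: for an event $q$, if there is precisely one future-pointing light ray from a point $\gamma(t_1)$ to $q$ and precisely one future-pointing light ray from $q$ to a point $\gamma(t_2)$, the radar time and radar distance of $q$ with respect to $\gamma$ are $T=\tfrac12(t_2+t_1)$ and $R=\tfrac12(t_2-t_1)$. "The radar method can be carried through in both directions" means: for every $\tilde t$ the event $\tilde\gamma(\tilde t)$ has well-defined radar time $T(\tilde t)$ and radar distance $R(\tilde t)$ with respect to $\gamma$, and for every $t$ the event $\gamma(t)$ has well-defined radar time $\tilde T(t)$ and radar distance $\tilde R(t)$ with respect to $\tilde\gamma$ (each event lying in a radar neighborhood of the other clock, so that these are smooth functions). $\tilde\gamma$ is synchroneous to $\gamma$ if $T(\tilde t)=\tilde t$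 for all $\tilde t$; $\gamma$ is synchroneous to $\tilde\gamma$ if $\tilde T(t)=t$ for all $t$. *)

theory Defs
  imports "HOL-Analysis.Analysis"
begin

definition partial_d :: "('a::euclidean_space \<Rightarrow> real) \<Rightarrow> 'a \<Rightarrow> 'a \<Rightarrow> real" where
  "partial_d f b x = frechet_derivative f (at x) b"

primrec Ck_on :: "nat \<Rightarrow> 'a::euclidean_space set \<Rightarrow> ('a \<Rightarrow> real) \<Rightarrow> bool" where
  "Ck_on 0 S f = continuous_on S f"
| "Ck_on (Suc k) S f =
     ((\<forall>x\<in>S. f differentiable (at x)) \<and> (\<forall>b\<in>Basis. Ck_on k S (partial_d f b)))"

definition smooth_fun_on :: "'a::euclidean_space set \<Rightarrow> ('a \<Rightarrow> real) \<Rightarrow> bool" where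
  "smooth_fun_on S f \<longleftrightarrow> (\<forall>k. Ck_on k S f)"

definition smooth_map_on :: "'a::euclidean_space set \<Rightarrow> ('a \<Rightarrow> 'b::euclidean_space) \<Rightarrow> bool" where
  "smooth_map_on S F \<longleftrightarrow> (\<forall>b\<in>Basis. smooth_fun_on S (\<lambda>x. F x \<bullet> b))"

type_synonym 'm chart = "'m set \<times> ('m \<Rightarrow> real^4)"

definition is_chart :: "'m::topological_space set \<Rightarrow> ('m \<Rightarrow> real^4) \<Rightarrow> bool" where
  "is_chart U \<phi> \<longleftrightarrow> open U \<and> open (\<phi> ` U) \<and> homeomorphism U (\<phi> ` U) \<phi> (inv_into U \<phi>)"

definition smooth_atlas :: "'m::topological_space chart set \<Rightarrow> bool" where
  "smooth_atlas A \<longleftrightarrow>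
     (\<forall>(U,\<phi>)\<in>A. is_chart U \<phi>) \<and> \<Union>(fst ` A) = UNIV \<and>
     (\<forall>(U,\<phi>)\<in>A. \<forall>(V,\<psi>)\<in>A. smooth_map_on (\<phi> ` (U \<inter> V)) (\<psi> \<circ> inv_into U \<phi>))"

definition jac :: "'m set \<Rightarrow> ('m \<Rightarrow> real^4) \<Rightarrow> ('m \<Rightarrow> real^4) \<Rightarrow> real^4 \<Rightarrow> real^4^4" where
  "jac U \<phi> \<psi> x = matrix (frechet_derivative (\<psi> \<circ> inv_into U \<phi>) (at x))"

definition minkowski :: "real^4^4" where
  "minkowski = (\<chi> i j. if i = j then (if i = 0 then -1 else 1) else 0)"

definition lorentz_form :: "real^4^4 \<Rightarrow> bool" where
  "lorentz_form M \<longleftrightarrow> transpose M = M \<and>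
     (\<exists>P. invertible P \<and> M = transpose P ** minkowski ** P)"

definition gq :: "real^4^4 \<Rightarrow> real^4 \<Rightarrow> real^4 \<Rightarrow> real" where
  "gq M v w = v \<bullet> (M *v w)"

definition lorentz_metric ::
  "'m::topological_space chart set \<Rightarrow> ('m chart \<Rightarrow> real^4 \<Rightarrow> real^4^4) \<Rightarrow> bool" where
  "lorentz_metric A G \<longleftrightarrow>
     (\<forall>(U,\<phi>)\<in>A. smooth_map_on (\<phi> ` U) (G (U,\<phi>)) \<and> (\<forall>x\<in>\<phi> ` U. lorentz_form (G (U,\<phi>) x))) \<and>
     (\<forall>(U,\<phi>)\<in>A. \<forall>(V,\<psi>)\<in>A. \<forall>x\<in>\<phi> ` (U \<inter> V).
        G (U,\<phi>) x = transpose (jac U \<phi> \<psi> x) ** G (V,\<psi>) (\<psi> (inv_into U \<phi> x)) ** jac U \<phi> \<psi> x)"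

text \<open>A time orientation: a continuous timelike vector field X (given in chart components);
  future-pointing causal vectors are those v with g(v,X) < 0.\<close>
definition time_orientation ::
  "'m::topological_space chart set \<Rightarrow> ('m chart \<Rightarrow> real^4 \<Rightarrow> real^4^4)
     \<Rightarrow> ('m chart \<Rightarrow> real^4 \<Rightarrow> real^4) \<Rightarrow> bool" where
  "time_orientation A G X \<longleftrightarrow>
     (\<forall>(U,\<phi>)\<in>A. continuous_on (\<phi> ` U) (X (U,\<phi>)) \<and>
        (\<forall>x\<in>\<phi> ` U. gq (G (U,\<phi>) x) (X (U,\<phi>) x) (X (U,\<phi>) x) < 0)) \<and>
     (\<forall>(U,\<phi>)\<in>A. \<forall>(V,\<psi>)\<in>A. \<forall>x\<in>\<phi> ` (U \<inter> V).
        X (V,\<psi>) (\<psi> (inv_into U \<phi> x)) = jac U \<phi> \<psi> x *v X (U,\<phi>) x)"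

definition spacetime ::
  "'m::{t2_space,second_countable_topology} chart set \<Rightarrow> ('m chart \<Rightarrow> real^4 \<Rightarrow> real^4^4)
     \<Rightarrow> ('m chart \<Rightarrow> real^4 \<Rightarrow> real^4) \<Rightarrow> bool" where
  "spacetime A G X \<longleftrightarrow> smooth_atlas A \<and> lorentz_metric A G \<and> time_orientation A G X"

definition smooth_curve_on :: "'m::topological_space chart set \<Rightarrow> real set \<Rightarrow> (real \<Rightarrow> 'm) \<Rightarrow> bool" where
  "smooth_curve_on A I c \<longleftrightarrow> open I \<and> continuous_on I c \<and>
     (\<forall>(U,\<phi>)\<in>A. smooth_map_on {s\<in>I. c s \<in> U} (\<phi> \<circ> c))"

definition cvel :: "('m \<Rightarrow> real^4) \<Rightarrow> (real \<Rightarrow> 'm) \<Rightarrow> real \<Rightarrow> real^4" where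
  "cvel \<phi> c s = vector_derivative (\<phi> \<circ> c) (at s)"

definition christoffel :: "(real^4 \<Rightarrow> real^4^4) \<Rightarrow> real^4 \<Rightarrow> 4 \<Rightarrow> 4 \<Rightarrow> 4 \<Rightarrow> real" where
  "christoffel Gf y k i j = (1/2) * (\<Sum>l\<in>UNIV. matrix_inv (Gf y) $ k $ l *
      (partial_d (\<lambda>z. Gf z $ l $ j) (axis i 1) y + partial_d (\<lambda>z. Gf z $ l $ i) (axis j 1) y
       - partial_d (\<lambda>z. Gf z $ i $ j) (axis l 1) y))"

definition geodesic_on ::
  "'m::topological_space chart set \<Rightarrow> ('m chart \<Rightarrow> real^4 \<Rightarrow> real^4^4) \<Rightarrow> real set \<Rightarrow> (real \<Rightarrow> 'm) \<Rightarrow> bool" where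
  "geodesic_on A G I c \<longleftrightarrow> smooth_curve_on A I c \<and>
     (\<forall>(U,\<phi>)\<in>A. \<forall>s\<in>I. c s \<in> U \<longrightarrow>
        (\<forall>k. vector_derivative (\<lambda>r. cvel \<phi> c r) (at s) $ k +
              (\<Sum>i\<in>UNIV. \<Sum>j\<in>UNIV. christoffel (G (U,\<phi>)) (\<phi> (c s)) k i j
                   * cvel \<phi> c s $ i * cvel \<phi> c s $ j) = 0))"

definition fp_lightlike_geodesic_on ::
  "'m::topological_space chart set \<Rightarrow> ('m chart \<Rightarrow> real^4 \<Rightarrow> real^4^4) \<Rightarrow> ('m chart \<Rightarrow> real^4 \<Rightarrow> real^4)
     \<Rightarrow> real set \<Rightarrow> (real \<Rightarrow> 'm) \<Rightarrow> bool" where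
  "fp_lightlike_geodesic_on A G X I c \<longleftrightarrow> geodesic_on A G I c \<and>
     (\<forall>(U,\<phi>)\<in>A. \<forall>s\<in>I. c s \<in> U \<longrightarrow>
        cvel \<phi> c s \<noteq> 0 \<and>
        gq (G (U,\<phi>) (\<phi> (c s))) (cvel \<phi> c s) (cvel \<phi> c s) = 0 \<and>
        gq (G (U,\<phi>) (\<phi> (c s))) (cvel \<phi> c s) (X (U,\<phi>) (\<phi> (c s))) < 0)"

text \<open>A future-pointing light ray from p to q: a future-pointing lightlike geodesic segment
  parametrised (affinely) over [0,1] with c 0 = p, c 1 = q.  Two rays are the same iff they agree on [0,1].\<close>
definition light_ray ::
  "'m::topological_space chart set \<Rightarrow> ('m chart \<Rightarrow> real^4 \<Rightarrow> real^4^4) \<Rightarrow> ('m chart \<Rightarrow> real^4 \<Rightarrow> real^4)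
     \<Rightarrow> (real \<Rightarrow> 'm) \<Rightarrow> 'm \<Rightarrow> 'm \<Rightarrow> bool" where
  "light_ray A G X c p q \<longleftrightarrow>
     (\<exists>a b. a < 0 \<and> 1 < b \<and> fp_lightlike_geodesic_on A G X {a<..<b} c) \<and> c 0 = p \<and> c 1 = q"

definition clock ::
  "'m::topological_space chart set \<Rightarrow> ('m chart \<Rightarrow> real^4 \<Rightarrow> real^4^4) \<Rightarrow> ('m chart \<Rightarrow> real^4 \<Rightarrow> real^4)
     \<Rightarrow> (real \<Rightarrow> 'm) \<Rightarrow> bool" where
  "clock A G X \<gamma> \<longleftrightarrow> smooth_curve_on A UNIV \<gamma> \<and> inj \<gamma> \<and> continuous_on (range \<gamma>) (inv \<gamma>) \<and>
     (\<forall>(U,\<phi>)\<in>A. \<forall>s. \<gamma> s \<in> U \<longrightarrow>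
        gq (G (U,\<phi>) (\<phi> (\<gamma> s))) (cvel \<phi> \<gamma> s) (cvel \<phi> \<gamma> s) < 0 \<and>
        gq (G (U,\<phi>) (\<phi> (\<gamma> s))) (cvel \<phi> \<gamma> s) (X (U,\<phi>) (\<phi> (\<gamma> s))) < 0)"

definition radar_emission where
  "radar_emission A G X \<gamma> q t1 \<longleftrightarrow>
     (\<exists>c. light_ray A G X c (\<gamma> t1) q) \<and>
     (\<forall>t c t' c'. light_ray A G X c (\<gamma> t) q \<and> light_ray A G X c' (\<gamma> t') q
        \<longrightarrow> t = t' \<and> (\<forall>s\<in>{0..1}. c s = c' s))"

definition radar_reception where
  "radar_reception A G X \<gamma> q t2 \<longleftrightarrow>
     (\<exists>c. light_ray A G X c q (\<gamma> t2)) \<and>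
     (\<forall>t c t' c'. light_ray A G X c q (\<gamma> t) \<and> light_ray A G X c' q (\<gamma> t')
        \<longrightarrow> t = t' \<and> (\<forall>s\<in>{0..1}. c s = c' s))"

definition has_radar where
  "has_radar A G X \<gamma> q T R \<longleftrightarrow>
     (\<exists>t1 t2. radar_emission A G X \<gamma> q t1 \<and> radar_reception A G X \<gamma> q t2 \<and>
        T = (t2 + t1) / 2 \<and> R = (t2 - t1) / 2)"

end

theory Submission
  imports Defs
begin



lemma cont_inj_key:
  fixes f :: "real \<Rightarrow> real"
  assumes c: "continuous_on UNIV f" and i: "inj f"
    and uv: "u < v" and xy: "x < y" and fxy: "f x < f y"
  shows "f u < f v"
proof (rule ccontr)
  assume "\<not> f u < f v"
  moreover have "f u \<noteq> f v" using i uv by (metis inj_eq less_irrefl)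
  ultimately have lt: "f v < f u" by simp
  define pp where "pp = (\<lambda>t::real. (1-t)*u + t*x)"
  define qq where "qq = (\<lambda>t::real. (1-t) * v + t * y)"
  define h where "h = (\<lambda>t. f (qq t) - f (pp t))"
  have pq: "pp t < qq t" if "0 \<le> t" "t \<le> 1" for t
  proof -
    have "(1-t)*u \<le> (1-t) * v" using that uv by (intro mult_left_mono) auto
    moreover have "t*x \<le> t*y" using that xy by (intro mult_left_mono) auto
    moreover have "(1-t)*u < (1-t) * v \<or> t*x < t*y" using that uv xy
      by (cases "t = 1") auto
    ultimately show ?thesis unfolding pp_def qq_def by linarith
  qed
  have ct: "isCont h t" for t
  proof -
    have "continuous_on UNIV h" unfolding h_def pp_def qq_def
      by (intro continuous_intros continuous_on_compose2[OF c]) auto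
    then show ?thesis by (simp add: continuous_on_eq_continuous_at)
  qed
  have "h 0 \<le> 0" using lt by (simp add: h_def pp_def qq_def)
  moreover have "0 \<le> h 1" using fxy by (simp add: h_def pp_def qq_def)
  ultimately obtain t where t: "0 \<le> t" "t \<le> 1" "h t = 0"
    using IVT[of h 0 0 1] ct by auto
  then have "f (qq t) = f (pp t)" by (simp add: h_def)
  then have "qq t = pp t" using i by (simp add: inj_eq)
  with pq[OF t(1,2)] show False by simp
qed

lemma cont_inj_dichot:
  fixes f :: "real \<Rightarrow> real"
  assumes c: "continuous_on UNIV f" and i: "inj f"
  shows "(\<forall>x y. x < y \<longrightarrow> f x < f y) \<or> (\<forall>x y. x < y \<longrightarrow> f y < f x)"
proof -
  have "f 0 \<noteq> f 1" using i by (metis inj_eq zero_neq_one)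
  then show ?thesis
  proof (cases "f 0 < f 1")
    case True then show ?thesis using cont_inj_key[OF c i _ _ True] by auto
  next
    case False
    then have lt: "(\<lambda>x. - f x) 0 < (\<lambda>x. - f x) 1" using \<open>f 0 \<noteq> f 1\<close> by simp
    have c': "continuous_on UNIV (\<lambda>x. - f x)" using c by (intro continuous_intros)
    have i': "inj (\<lambda>x. - f x)" using i by (simp add: inj_def)
    show ?thesis using cont_inj_key[OF c' i' _ _ lt] by auto
  qed
qed

lemma const_fun:
  fixes a :: "real \<Rightarrow> real"
  assumes c: "continuous_on UNIV a"
    and p: "\<And>s. a (s + 2 * a s) = a s" and m: "\<And>s. a (s - 2 * a s) = a s"
  shows "a x = a y"
proof -
  have gen: "b x \<le> b y" if c: "continuous_on UNIV b" and p: "\<And>s. b (s + 2 * b s) = b s"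
      and xy: "x < y" for b :: "real \<Rightarrow> real" and x y
  proof -
    define phi where "phi = (\<lambda>s. s + 2 * b s)"
    have cphi: "continuous_on UNIV phi" unfolding phi_def using c by (intro continuous_intros)
    have iphi: "inj phi"
    proof (rule injI)
      fix u v assume "phi u = phi v"
      then have "b (phi u) = b (phi v)" by simp
      then have "b u = b v" using p by (simp add: phi_def)
      with \<open>phi u = phi v\<close> show "u = v" by (simp add: phi_def)
    qed
    have pp: "phi (phi s) = s + 4 * b s" for s using p[of s] by (simp add: phi_def)
    have mono2: "u < v \<Longrightarrow> u + 4 * b u < v + 4 * b v" for u v
      using cont_inj_dichot[OF cphi iphi] pp by metis
    have inv: "b (s + 4 * real n * b s) = b s" for n s
    proof (induction n)
      case 0 then show ?case by simp
    next
      case (Suc n)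
      have "b (s + 4 * real (Suc n) * b s) = b (phi (phi (s + 4 * real n * b s)))"
        using pp[of "s + 4 * real n * b s"] Suc by (simp add: algebra_simps)
      also have "\<dots> = b (s + 4 * real n * b s)"
        using p[of "phi (s + 4 * real n * b s)"] p[of "s + 4 * real n * b s"]
        unfolding phi_def by simp
      finally show ?case using Suc by simp
    qed
    have ineq: "u + 4 * real n * b u < v + 4 * real n * b v" if "u < v" for n u v
      using that
    proof (induction n arbitrary: u v)
      case 0 then show ?case by simp
    next
      case (Suc n)
      have "u + 4 * real n * b u + 4 * b (u + 4 * real n * b u)
          < v + 4 * real n * b v + 4 * b (v + 4 * real n * b v)"
        using mono2 Suc by blast
      then show ?case using inv[of u n] inv[of v n] by (simp add: algebra_simps)
    qed
    show ?thesis
    proof (rule ccontr)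
      assume "\<not> b x \<le> b y"
      then have d: "b y < b x" by simp
      obtain n :: nat where n: "(y - x) / (4 * (b x - b y)) < real n"
        using reals_Archimedean2 by blast
      have "(y - x) < real n * (4 * (b x - b y))" using n d by (simp add: divide_less_eq)
      moreover have "x + 4 * real n * b x < y + 4 * real n * b y" using ineq xy by blast
      ultimately show False by (simp add: algebra_simps)
    qed
  qed
  have c': "continuous_on UNIV (\<lambda>s. - a s)"
    using c by (intro continuous_intros)
  have p': "(\<lambda>s. - a s) (s + 2 * (\<lambda>s. - a s) s) = (\<lambda>s. - a s) s" for s
    using m[of "s"] by simp
  have "a u = a v" if "u < v" for u v
  proof -
    have "a u \<le> a v" using gen[OF c p that] .
    moreover have "- a u \<le> - a v" using gen[OF c' p'] that by simp
    ultimately show ?thesis by simp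
  qed
  then show ?thesis by (cases x y rule: linorder_cases) auto
qed

lemma radar_link:
  fixes tt r :: real and rt :: "real \<Rightarrow> real"
  assumes h1: "has_radar A G X g (gt tt) tt r"
    and h2: "\<forall>s. has_radar A G X gt (g s) s (rt s)"
  shows "rt (tt - r) = r \<and> rt (tt + r) = r"
proof -
  obtain t1 t2 where e: "radar_emission A G X g (gt tt) t1"
      and rc: "radar_reception A G X g (gt tt) t2"
      and T: "tt = (t2 + t1) / 2" and Rr: "r = (t2 - t1) / 2"
    using h1 unfolding has_radar_def by blast
  obtain c where c: "light_ray A G X c (g t1) (gt tt)"
    using e unfolding radar_emission_def by blast
  obtain d where d: "light_ray A G X d (gt tt) (g t2)"
    using rc unfolding radar_reception_def by blast
  obtain a1 a2 where rc2: "radar_reception A G X gt (g t1) a2"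
      and T1: "t1 = (a2 + a1) / 2" and R1: "rt t1 = (a2 - a1) / 2"
    using h2[rule_format, of t1] unfolding has_radar_def by blast
  obtain c2 where c2: "light_ray A G X c2 (g t1) (gt a2)"
    using rc2 unfolding radar_reception_def by blast
  have "tt = a2" using rc2 c c2 unfolding radar_reception_def by blast
  then have 1: "rt (tt - r) = r"
  proof -
    have e1: "tt - r = t1" using T Rr by (simp add: field_simps)
    have e2: "rt t1 = a2 - t1" using T1 R1 by (simp add: field_simps)
    have e3: "r = tt - t1" using T Rr by (simp add: field_simps)
    show ?thesis using e1 e2 e3 \<open>tt = a2\<close> by simp
  qed
  obtain b1 b2 where em2: "radar_emission A G X gt (g t2) b1"
      and T2: "t2 = (b2 + b1) / 2" and R2: "rt t2 = (b2 - b1) / 2"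
    using h2[rule_format, of t2] unfolding has_radar_def by blast
  obtain d2 where d2: "light_ray A G X d2 (gt b1) (g t2)"
    using em2 unfolding radar_emission_def by blast
  have "tt = b1" using em2 d d2 unfolding radar_emission_def by blast
  then have 2: "rt (tt + r) = r"
  proof -
    have e1: "tt + r = t2" using T Rr by (simp add: field_simps)
    have e2: "rt t2 = t2 - b1" using T2 R2 by (simp add: field_simps)
    have e3: "r = t2 - tt" using T Rr by (simp add: field_simps)
    show ?thesis using e1 e2 e3 \<open>tt = b1\<close> by simp
  qed
  show ?thesis using 1 2 by simp
qed

lemma smooth_cont: "smooth_fun_on UNIV (f::real \<Rightarrow> real) \<Longrightarrow> continuous_on UNIV f"
  unfolding smooth_fun_on_def by (metis Ck_on.simps(1))

theorem proposition3:
  fixes A :: "'m::{t2_space,second_countable_topology} chart set"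
    and G :: "'m chart \<Rightarrow> real^4 \<Rightarrow> real^4^4"
    and X :: "'m chart \<Rightarrow> real^4 \<Rightarrow> real^4"
    and \<gamma> \<gamma>t :: "real \<Rightarrow> 'm"
    and T R Tt Rt :: "real \<Rightarrow> real"
  assumes "spacetime A G X"
    and "clock A G X \<gamma>" and "clock A G X \<gamma>t"
    and "range \<gamma> \<inter> range \<gamma>t = {}"
    and "\<forall>tt. has_radar A G X \<gamma> (\<gamma>t tt) (T tt) (R tt)"
    and "\<forall>t. has_radar A G X \<gamma>t (\<gamma> t) (Tt t) (Rt t)"
    and "smooth_fun_on UNIV T" and "smooth_fun_on UNIV R"
    and "smooth_fun_on UNIV Tt" and "smooth_fun_on UNIV Rt"
    and "\<forall>tt. T tt = tt"
    and "\<forall>t. Tt t = t"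
  shows "\<exists>R0. (\<forall>tt. R tt = R0) \<and> (\<forall>t. Rt t = R0)"
proof -
  have hR: "has_radar A G X \<gamma> (\<gamma>t tt) tt (R tt)" for tt using assms(5,11) by metis
  have hRt: "has_radar A G X \<gamma>t (\<gamma> t) t (Rt t)" for t using assms(6,12) by metis
  have L1: "Rt (tt - R tt) = R tt \<and> Rt (tt + R tt) = R tt" for tt
    using radar_link[where g=\<gamma> and gt=\<gamma>t and tt=tt and r="R tt" and rt=Rt, OF hR] hRt by blast
  have L2: "R (t - Rt t) = Rt t \<and> R (t + Rt t) = Rt t" for t
    using radar_link[where g=\<gamma>t and gt=\<gamma> and tt=t and r="Rt t" and rt=R, OF hRt] hR by blast
  have p: "Rt (s + 2 * Rt s) = Rt s" for s
    using L1[of "s + Rt s"] L2[of s] by (simp add: algebra_simps)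
  have m: "Rt (s - 2 * Rt s) = Rt s" for s
    using L1[of "s - Rt s"] L2[of s] by (simp add: algebra_simps)
  have cRt: "continuous_on UNIV Rt" using smooth_cont assms(10) .
  have cst: "Rt t = Rt 0" for t using const_fun[OF cRt p m] .
  have "R tt = Rt 0" for tt using L2[of "tt - Rt 0"] cst[of "tt - Rt 0"] by simp
  then show ?thesis using cst by blast
qed

end
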